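(* For every $N\ge 2$, the median distance $Md_N$ and the average distance $\bar d_N=\frac{N+1}{3}$ of the path (chain) on $N$ nodes satisfy $Md_N\le \bar d_N$, with equality if and only if $N\in\{2,5,8,11\}$.
   Context: The path on $N$ nodes has exactly $N-j$ unordered pairs of nodes at (shortest-path) distance $j$, $j=1,\dots,N-1$. The median distance is the median of the multiset of these $N(N-1)/2$ distances (the average of the two middle values if this number is even); the average distance is the arithmetic mean of that multiset. *)

theory Defs
  imports Complex_Main
begin

text \<open>Path graph on N nodes: nodes 0..N-1, edges between i and i+1; the
shortest-path distance between nodes i and j is |i - j|.\<close>

definition path_dist :: "nat \<Rightarrow> nat \<Rightarrow> nat" where
  "path_dist i j = (if i \<le> j then j - i else i - j)"

definition path_distances :: "nat \<Rightarrow> nat list" where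
  "path_distances N = [path_dist i j. i \<leftarrow> [0..<N], j \<leftarrow> [0..<N], i < j]"

definition median :: "real list \<Rightarrow> real" where
  "median xs = (let ys = sort xs; m = length xs in
     if odd m then ys ! (m div 2)
     else (ys ! (m div 2 - 1) + ys ! (m div 2)) / 2)"

definition mean :: "real list \<Rightarrow> real" where
  "mean xs = sum_list xs / real (length xs)"

definition median_distance :: "nat \<Rightarrow> real" where
  "median_distance N = median (map real (path_distances N))"

definition average_distance :: "nat \<Rightarrow> real" where
  "average_distance N = mean (map real (path_distances N))"

end

theory Submission
  imports Defs
begin

lemma concat_if_single: "concat (map (\<lambda>j. if P j then [g j] else []) xs) = map g (filter P xs)"
  by (induction xs) auto

lemma sum_list_concat': "sum_list (concat xss) = sum_list (map sum_list (xss :: 'a::comm_monoid_add list list))"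
  by (induction xss) auto

lemma sum_pd: "sum_list (map f (path_distances N)) = (\<Sum>i<N. \<Sum>j\<in>{i<..<N}. (f (j - i) :: 'a::comm_monoid_add))"
proof -
  have fl: "filter (\<lambda>j. i < j) [0..<N] = [Suc i..<N]" for i
    by (induction N) auto
  have "path_distances N = concat (map (\<lambda>i. map (\<lambda>j. j - i) [Suc i..<N]) [0..<N])"
    unfolding path_distances_def
    unfolding concat_if_single fl
    by (auto simp: path_dist_def intro!: arg_cong[where f=concat] map_cong)
  hence "sum_list (map f (path_distances N)) = (\<Sum>i\<leftarrow>[0..<N]. \<Sum>j\<leftarrow>[Suc i..<N]. f (j - i))"
    by (simp add: map_concat sum_list_concat' comp_def)
  also have "\<dots> = (\<Sum>i<N. \<Sum>j\<in>{i<..<N}. f (j - i))"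
    by (simp add: sum_list_distinct_conv_sum_set atLeast0LessThan greaterThanLessThan_eq atLeastSucLessThan_greaterThanLessThan)
  finally show ?thesis .
qed

definition S :: "(nat \<Rightarrow> 'a::comm_monoid_add) \<Rightarrow> nat \<Rightarrow> 'a" where
  "S f N = (\<Sum>i<N. \<Sum>j\<in>{i<..<N}. f (j - i))"

lemma S_0: "S f 0 = 0" by (simp add: S_def)
lemma S_Suc: "S f (Suc N) = S f N + (\<Sum>i<N. f (Suc i))"
proof -
  have a: "{i<..<Suc N} = insert N {i<..<N}" if "i < N" for i using that by auto
  have e: "{N<..<Suc N} = {}" by auto
  have "S f (Suc N) = (\<Sum>i<N. \<Sum>j\<in>{i<..<Suc N}. f (j - i))"
    by (simp add: S_def e)
  also have "\<dots> = (\<Sum>i<N. f (N - i) + (\<Sum>j\<in>{i<..<N}. f (j - i)))"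
    by (rule sum.cong) (auto simp: a)
  also have "\<dots> = S f N + (\<Sum>i<N. f (N - i))"
    by (simp add: S_def sum.distrib add.commute)
  also have "(\<Sum>i<N. f (N - i)) = (\<Sum>i<N. f (Suc i))"
    using sum.nat_diff_reindex[of "\<lambda>i. f (Suc i)" N] by (simp add: Suc_diff_Suc)
  finally show ?thesis .
qed

lemma S_len: "2 * S (\<lambda>_. 1::nat) N = N * (N - 1)"
  by (induction N) (auto simp: S_0 S_Suc algebra_simps)

lemma S_sum: "6 * S (\<lambda>d. real d) N = real N * (real N - 1) * (real N + 1)"
proof (induction N)
  case 0 then show ?case by (simp add: S_0)
next
  case (Suc N)
  have g: "2 * (\<Sum>i<N. real (Suc i)) = real N * (real N + 1)"
    by (induction N) (auto simp: algebra_simps)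
  show ?case using Suc g by (simp add: S_Suc algebra_simps)
qed

lemma S_cnt0: "S (\<lambda>d. if d \<le> k then 1::nat else 0) N = (\<Sum>i<N. min i k)"
proof (induction N)
  case 0 then show ?case by (simp add: S_0)
next
  case (Suc N)
  have g: "(\<Sum>i<N. if Suc i \<le> k then 1::nat else 0) = min N k"
    by (induction N) auto
  show ?case using Suc g by (simp add: S_Suc)
qed

lemma S_cnt: "k \<le> N \<Longrightarrow> 2 * S (\<lambda>d. if d \<le> k then 1::nat else 0) N + k * (k + 1) = 2 * k * N"
proof (induction N rule: dec_induct)
  case base
  have "2 * (\<Sum>i<k. i) + k = k * k" by (induction k) (auto simp: algebra_simps)
  then show ?case by (simp add: S_cnt0 algebra_simps)
next
  case (step N)
  then show ?case by (simp add: S_cnt0 algebra_simps)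
qed

lemma len_filter_sum: "length (filter P xs) = sum_list (map (\<lambda>x. if P x then 1::nat else 0) xs)"
  by (induction xs) auto

lemma sorted_nth_le:
  fixes ys :: "real list"
  assumes "sorted ys" "p < length (filter (\<lambda>y. y \<le> x) ys)"
  shows "ys ! p \<le> x"
proof (rule ccontr)
  assume c: "\<not> ys ! p \<le> x"
  have pl: "p < length ys" using assms(2) length_filter_le[of _ ys] by (meson order.strict_trans2)
  have "\<forall>y\<in>set (drop p ys). \<not> y \<le> x"
  proof
    fix y assume "y \<in> set (drop p ys)"
    then obtain q where q: "q < length (drop p ys)" "y = drop p ys ! q" by (metis in_set_conv_nth)
    hence "y = ys ! (p + q)" "p + q < length ys" by auto
    hence "ys ! p \<le> y" using assms(1) by (simp add: sorted_nth_mono)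
    thus "\<not> y \<le> x" using c by simp
  qed
  hence "filter (\<lambda>y. y \<le> x) (drop p ys) = []" by (simp add: filter_empty_conv)
  hence "filter (\<lambda>y. y \<le> x) ys = filter (\<lambda>y. y \<le> x) (take p ys)"
    by (metis append_Nil2 append_take_drop_id filter_append)
  hence "length (filter (\<lambda>y. y \<le> x) ys) \<le> p"
    by (metis length_filter_le length_take min.bounded_iff order_trans nle_le)
  thus False using assms(2) by simp
qed

lemma median_le:
  assumes "xs \<noteq> []"
  shows "median xs \<le> sort xs ! (length xs div 2)"
proof -
  have s: "sorted (sort xs)" by simp
  have l: "length (sort xs) = length xs" by simp
  have "length xs div 2 < length xs" using assms by simp
  hence "sort xs ! (length xs div 2 - 1) \<le> sort xs ! (length xs div 2)"
    using s l by (intro sorted_nth_mono) auto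
  thus ?thesis unfolding median_def Let_def by auto
qed

lemma md2: "median_distance 2 = 1"
  unfolding median_distance_def path_distances_def path_dist_def median_def
  by code_simp

lemma md3: "median_distance 3 = 1"
  unfolding median_distance_def path_distances_def path_dist_def median_def
  by code_simp

lemma md4: "median_distance 4 = 3/2"
  unfolding median_distance_def path_distances_def path_dist_def median_def
  by code_simp

lemma md5: "median_distance 5 = 2"
  unfolding median_distance_def path_distances_def path_dist_def median_def
  by code_simp

lemma md6: "median_distance 6 = 2"
  unfolding median_distance_def path_distances_def path_dist_def median_def
  by code_simp

lemma md7: "median_distance 7 = 2"
  unfolding median_distance_def path_distances_def path_dist_def median_def
  by code_simp

lemma md8: "median_distance 8 = 3"
  unfolding median_distance_def path_distances_def path_dist_def median_def
  by code_simp

lemma md9: "median_distance 9 = 3"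
  unfolding median_distance_def path_distances_def path_dist_def median_def
  by code_simp

lemma md10: "median_distance 10 = 3"
  unfolding median_distance_def path_distances_def path_dist_def median_def
  by code_simp

lemma md11: "median_distance 11 = 4"
  unfolding median_distance_def path_distances_def path_dist_def median_def
  by code_simp

lemma md12: "median_distance 12 = 4"
  unfolding median_distance_def path_distances_def path_dist_def median_def
  by code_simp

lemma md13: "median_distance 13 = 4"
  unfolding median_distance_def path_distances_def path_dist_def median_def
  by code_simp

lemma small:
  assumes "2 \<le> N" "N < 14"
  shows "median_distance N \<le> (real N + 1) / 3 \<and>
    (median_distance N = (real N + 1) / 3 \<longleftrightarrow> N \<in> {2, 5, 8, 11})"
proof -
  have "N = 2 \<or> N = 3 \<or> N = 4 \<or> N = 5 \<or> N = 6 \<or> N = 7 \<or> N = 8 \<or> N = 9 \<or> N = 10 \<or> N = 11 \<or> N = 12 \<or> N = 13" using assms by presburger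
  thus ?thesis by (auto simp: md2 md3 md4 md5 md6 md7 md8 md9 md10 md11 md12 md13)
qed

lemma avg: assumes "2 \<le> N" shows "average_distance N = (real N + 1) / 3"
proof -
  let ?xs = "path_distances N"
  have L: "2 * length ?xs = N * (N - 1)"
    using S_len[of N] sum_pd[of "\<lambda>_. 1::nat" N] sum_list_triv[of "1::nat" ?xs]
    by (simp add: S_def)
  have Sm: "6 * sum_list (map real ?xs) = real N * (real N - 1) * (real N + 1)"
    using S_sum[of N] sum_pd[of real N] by (simp add: S_def)
  have L': "2 * real (length ?xs) = real N * (real N - 1)"
    using L assms by (metis of_nat_1 of_nat_diff of_nat_mult of_nat_numeral le_trans one_le_numeral)
  have pos: "real N * (real N - 1) > 0" using assms by simp
  have Lp: "real (length ?xs) > 0" using L' pos by linarith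
  have "sum_list (map real ?xs) = real (length ?xs) * ((real N + 1) / 3)"
  proof -
    have "6 * sum_list (map real ?xs) = (2 * real (length ?xs)) * (real N + 1)"
      using Sm L' by simp
    thus ?thesis by (simp add: algebra_simps)
  qed
  thus ?thesis unfolding average_distance_def mean_def using Lp by simp
qed

lemma arith_big:
  fixes N k c M :: nat
  assumes "14 \<le> N" "k = N div 3" "2 * M = N * (N - 1)" "2 * c + k * (k + 1) = 2 * k * N"
  shows "M div 2 < c"
proof -
  obtain r where r: "N = 3 * k + r" "r < 3" using assms(2) by (metis div_mod_decomp mod_less_divisor zero_less_numeral mult.commute)
  have k4: "k \<ge> 4" using assms(1,2) by simp
  have "2 * M < 4 * c"
  proof -
    have "4 * c + 2 * k * (k + 1) = 4 * k * N" using assms(4) by simp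
    moreover have "2 * M + N = N * N" using assms(3) assms(1) by (cases N) (auto simp: algebra_simps)
    moreover have "N * N + 2 * k * (k+1) < 4 * k * N + N"
    proof -
      have h: "4 * k \<le> k * k" using k4 mult_le_mono1[OF k4] by simp
      have e1: "N * N = 9 * (k * k) + 6 * r * k + r * r" unfolding r(1) by (simp add: algebra_simps)
      have e2: "2 * k * (k+1) = 2 * (k * k) + 2 * k" by (simp add: algebra_simps)
      have e3: "4 * k * N = 12 * (k * k) + 4 * r * k" unfolding r(1) by (simp add: algebra_simps)
      have "r = 0 \<or> r = 1 \<or> r = 2" using r by auto
      thus ?thesis
      proof (elim disjE)
        assume rr: "r = 0"
        have "N = 3 * k + 0" using r(1) rr by simp
        thus ?thesis using e1 e2 e3 h k4 unfolding rr by linarith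
      next
        assume rr: "r = 1"
        have "N = 3 * k + 1" using r(1) rr by simp
        thus ?thesis using e1 e2 e3 h k4 unfolding rr by linarith
      next
        assume rr: "r = 2"
        have "N = 3 * k + 2" using r(1) rr by simp
        thus ?thesis using e1 e2 e3 h k4 unfolding rr by linarith
      qed
    qed
    ultimately show ?thesis by linarith
  qed
  thus ?thesis by linarith
qed

lemma large: assumes "14 \<le> N" shows "median_distance N < (real N + 1) / 3"
proof -
  define xs where "xs = path_distances N"
  define M where "M = length xs"
  define k where "k = N div 3"
  define c where "c = length (filter (\<lambda>x. x \<le> k) xs)"
  have L: "2 * M = N * (N - 1)"
    using S_len[of N] sum_pd[of "\<lambda>_. 1::nat" N] sum_list_triv[of "1::nat" xs]
    by (simp add: S_def M_def xs_def)
  have C: "2 * c + k * (k + 1) = 2 * k * N"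
    using S_cnt[of k N] sum_pd[of "\<lambda>d. if d \<le> k then 1::nat else 0" N] len_filter_sum[of "\<lambda>x. x \<le> k" xs]
      assms by (simp add: S_def c_def xs_def k_def)
  have lt: "M div 2 < c" by (rule arith_big[OF assms k_def L C])
  define ys where "ys = sort (map real xs)"
  have "length (filter (\<lambda>y. y \<le> real k) ys) = length (filter (\<lambda>y. y \<le> real k) (map real xs))"
    unfolding ys_def by (simp only: filter_sort length_sort)
  also have "\<dots> = c" by (simp add: c_def filter_map comp_def)
  finally have "M div 2 < length (filter (\<lambda>y. y \<le> real k) ys)" using lt by simp
  hence "ys ! (M div 2) \<le> real k" by (intro sorted_nth_le) (simp_all add: ys_def)
  moreover have "xs \<noteq> []" using L assms M_def by auto
  ultimately have "median (map real xs) \<le> real k"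
    using median_le[of "map real xs"] by (simp add: ys_def M_def)
  moreover have "real k < (real N + 1) / 3"
  proof -
    have "3 * k \<le> N" unfolding k_def by simp
    hence "3 * real k \<le> real N" by linarith
    thus ?thesis by simp
  qed
  ultimately show ?thesis by (simp add: median_distance_def xs_def)
qed

theorem mainTheorem10:
  fixes N :: nat
  assumes "N \<ge> 2"
  shows "average_distance N = (real N + 1) / 3
       \<and> median_distance N \<le> average_distance N
       \<and> (median_distance N = average_distance N \<longleftrightarrow> N \<in> {2, 5, 8, 11})"
proof (cases "N < 14")
  case True
  have a: "average_distance N = (real N + 1) / 3" by (rule avg[OF assms])
  show ?thesis unfolding a using small[OF assms True] by blast
next
  case False
  hence "14 \<le> N" by simp
  from large[OF this] show ?thesis using avg[OF assms] False by auto
qed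

end
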